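(* Let $C\subset\mathbb R^3$ be an embedded curve with nowhere vanishing curvature which lies in a plane $\Pi$, and let $T_0$ be the reflection of $\mathbb R^3$ with respect to $\Pi$. Then $T_0\circ f=\check f$ for every $f\in\mathcal D(C)$.
   Context: $C$ is oriented. A developable strip along $C$ is the germ along $C$ of a $C^\infty$ embedding $f(u,v)=f(u,0)+v\,\xi_f(u)$ with $\mathbf c_f(u)=f(u,0)$ parametrizing $C$, $\xi_f$ unit, and zero Gaussian curvature; with the Frenet frame $(\mathbf e,\mathbf n,\mathbf b)$ of $\mathbf c_f$ write $\xi_f=\cos\beta_f\,\mathbf e+\sin\beta_f(\cos\alpha_f\,\mathbf n+\sin\alpha_f\,\mathbf b)$. $\mathcal D(C)$: strips with $\mathbf c_f$ inducing the orientation of $C$ and $0<|\cos\alpha_f|<1$, normalized by $0<|\alpha_f|<\pi/2$ (first angular function), $0<\beta_f<\pi$; zero Gaussian curvature is equivalent to $\cot\beta_f=(\alpha_f'+|\mathbf c_f'|\tau_f)/(|\mathbf c_f'|\kappa_f\sin\alpha_f)$ ($\kappa_f,\tau_f$ curvature and torsion of $\mathbf c_f$). The dual $\check f$ of $f$ is the (unique germ of) developable strip with $\check f(u,0)=f(u,0)$ and first angular function $-\alpha_f$. *)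

theory Defs
  imports "HOL-Analysis.Analysis" "HOL-Analysis.Cross3"
begin

fun dirder :: "'a::euclidean_space list \<Rightarrow> ('a \<Rightarrow> 'b::real_normed_vector) \<Rightarrow> 'a \<Rightarrow> 'b" where
  "dirder [] f = f"
| "dirder (d # ds) f = (\<lambda>x. frechet_derivative (dirder ds f) (at x) d)"

definition smooth_on :: "'a::euclidean_space set \<Rightarrow> ('a \<Rightarrow> 'b::real_normed_vector) \<Rightarrow> bool" where
  "smooth_on U f \<longleftrightarrow> open U \<and>
     (\<forall>ds. set ds \<subseteq> Basis \<longrightarrow>
        (\<forall>x\<in>U. dirder ds f differentiable (at x)) \<and> continuous_on U (dirder ds f))"

definition tangent :: "(real \<Rightarrow> real^3) \<Rightarrow> real \<Rightarrow> real^3" where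
  "tangent c u = vector_derivative c (at u)"

definition unit_tangent :: "(real \<Rightarrow> real^3) \<Rightarrow> real \<Rightarrow> real^3" where
  "unit_tangent c u = (1 / norm (tangent c u)) *\<^sub>R tangent c u"

definition curvature :: "(real \<Rightarrow> real^3) \<Rightarrow> real \<Rightarrow> real" where
  "curvature c u = norm (vector_derivative (unit_tangent c) (at u)) / norm (tangent c u)"

definition principal_normal :: "(real \<Rightarrow> real^3) \<Rightarrow> real \<Rightarrow> real^3" where
  "principal_normal c u =
     (1 / norm (vector_derivative (unit_tangent c) (at u))) *\<^sub>R vector_derivative (unit_tangent c) (at u)"

definition binormal :: "(real \<Rightarrow> real^3) \<Rightarrow> real \<Rightarrow> real^3" where
  "binormal c u = cross3 (unit_tangent c u) (principal_normal c u)"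

text \<open>The parametrization gam also fixes the orientation of C = gam ` I.\<close>
definition embedded_regular_curve :: "real set \<Rightarrow> (real \<Rightarrow> real^3) \<Rightarrow> bool" where
  "embedded_regular_curve I gam \<longleftrightarrow>
     open I \<and> is_interval I \<and> I \<noteq> {} \<and> smooth_on I gam \<and>
     (\<forall>u\<in>I. tangent gam u \<noteq> 0) \<and> inj_on gam I \<and>
     continuous_on (gam ` I) (inv_into I gam)"

definition pu :: "(real \<times> real \<Rightarrow> real^3) \<Rightarrow> real \<times> real \<Rightarrow> real^3" where
  "pu f p = frechet_derivative f (at p) (1, 0)"

definition pv :: "(real \<times> real \<Rightarrow> real^3) \<Rightarrow> real \<times> real \<Rightarrow> real^3" where
  "pv f p = frechet_derivative f (at p) (0, 1)"

text \<open>Gaussian curvature (L N - M^2)/(E G - F^2) computed with the unit normal;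
  using the non-normalized normal fu x fv this equals the expression below.\<close>
definition gauss_curvature :: "(real \<times> real \<Rightarrow> real^3) \<Rightarrow> real \<times> real \<Rightarrow> real" where
  "gauss_curvature f p =
     (let fu = pu f p; fv = pv f p;
          fuu = pu (pu f) p; fuv = pv (pu f) p; fvv = pv (pv f) p;
          \<nu> = cross3 fu fv;
          E = fu \<bullet> fu; F = fu \<bullet> fv; G = fv \<bullet> fv;
          L = fuu \<bullet> \<nu>; M = fuv \<bullet> \<nu>; N = fvv \<bullet> \<nu>
      in (L * N - M\<^sup>2) / (E * G - F\<^sup>2)\<^sup>2)"

definition base_curve :: "(real \<times> real \<Rightarrow> real^3) \<Rightarrow> real \<Rightarrow> real^3" where
  "base_curve f u = f (u, 0)"

definition ruling :: "(real \<times> real \<Rightarrow> real^3) \<Rightarrow> real \<Rightarrow> real^3" where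
  "ruling f u = vector_derivative (\<lambda>v. f (u, v)) (at 0)"

text \<open>f represents a germ along J x {0} of a developable strip: on some open
  neighbourhood U of J x {0}, f is a C-infinity embedding (injective immersion,
  homeomorphism onto its image) of ruled form f(u,v) = f(u,0) + v xi_f(u) with
  xi_f unit, and with zero Gaussian curvature.\<close>
definition developable_strip :: "real set \<Rightarrow> (real \<times> real \<Rightarrow> real^3) \<Rightarrow> bool" where
  "developable_strip J f \<longleftrightarrow>
     open J \<and> is_interval J \<and> J \<noteq> {} \<and>
     (\<exists>U. open U \<and> J \<times> {0} \<subseteq> U \<and> smooth_on U f \<and> inj_on f U \<and>
          continuous_on (f ` U) (inv_into U f) \<and>
          (\<forall>p\<in>U. cross3 (pu f p) (pv f p) \<noteq> 0) \<and>
          (\<forall>u v. (u, v) \<in> U \<longrightarrow> f (u, v) = f (u, 0) + v *\<^sub>R ruling f u) \<and>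
          (\<forall>u\<in>J. norm (ruling f u) = 1) \<and>
          (\<forall>p\<in>U. gauss_curvature f p = 0))"

definition angular_rep :: "(real \<times> real \<Rightarrow> real^3) \<Rightarrow> real \<Rightarrow> real \<Rightarrow> real \<Rightarrow> bool" where
  "angular_rep f u \<alpha> \<beta> \<longleftrightarrow>
     0 < \<bar>\<alpha>\<bar> \<and> \<bar>\<alpha>\<bar> < pi / 2 \<and> 0 < \<beta> \<and> \<beta> < pi \<and>
     ruling f u = cos \<beta> *\<^sub>R unit_tangent (base_curve f) u +
                  sin \<beta> *\<^sub>R (cos \<alpha> *\<^sub>R principal_normal (base_curve f) u +
                              sin \<alpha> *\<^sub>R binormal (base_curve f) u)"

definition first_angular_function :: "(real \<times> real \<Rightarrow> real^3) \<Rightarrow> real \<Rightarrow> real" where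
  "first_angular_function f u = (THE \<alpha>. \<exists>\<beta>. angular_rep f u \<alpha> \<beta>)"

text \<open>The class D(C) for the oriented curve C = gam ` I: f is a developable strip
  with parameter interval J whose base curve parametrizes C inducing the
  orientation given by gam, and whose ruling admits the normalized angular
  representation (equivalently 0 < |cos alpha_f| < 1).\<close>
definition in_D :: "real set \<Rightarrow> (real \<Rightarrow> real^3) \<Rightarrow> real set \<Rightarrow> (real \<times> real \<Rightarrow> real^3) \<Rightarrow> bool" where
  "in_D I gam J f \<longleftrightarrow>
     developable_strip J f \<and>
     (\<exists>\<phi>. strict_mono_on J \<phi> \<and> \<phi> ` J = I \<and> (\<forall>u\<in>J. base_curve f u = gam (\<phi> u))) \<and>
     (\<forall>u\<in>J. \<exists>\<alpha> \<beta>. angular_rep f u \<alpha> \<beta>)"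

definition is_dual :: "real set \<Rightarrow> (real \<Rightarrow> real^3) \<Rightarrow> real set \<Rightarrow>
    (real \<times> real \<Rightarrow> real^3) \<Rightarrow> (real \<times> real \<Rightarrow> real^3) \<Rightarrow> bool" where
  "is_dual I gam J f g \<longleftrightarrow>
     in_D I gam J g \<and> (\<forall>u\<in>J. g (u, 0) = f (u, 0)) \<and>
     (\<forall>u\<in>J. first_angular_function g u = - first_angular_function f u)"

definition plane :: "real^3 \<Rightarrow> real^3 \<Rightarrow> (real^3) set" where
  "plane p0 N = {x. (x - p0) \<bullet> N = 0}"

definition reflection :: "real^3 \<Rightarrow> real^3 \<Rightarrow> real^3 \<Rightarrow> real^3" where
  "reflection p0 N x = x - (2 * ((x - p0) \<bullet> N) / (N \<bullet> N)) *\<^sub>R N"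

end

theory Submission
  imports Defs
begin

definition RL :: "real^3 \<Rightarrow> real^3 \<Rightarrow> real^3" where
  "RL N x = x - (2 * (x \<bullet> N) / (N \<bullet> N)) *\<^sub>R N"

lemma reflection_RL: "reflection p0 N x = RL N x + (2 * (p0 \<bullet> N) / (N \<bullet> N)) *\<^sub>R N"
  unfolding reflection_def RL_def by (simp add: inner_diff_left diff_divide_distrib algebra_simps)

lemma linear_RL: "linear (RL N)"
  unfolding RL_def by (rule linearI) (auto simp: inner_add_left add_divide_distrib algebra_simps)

lemma bl_RL: "bounded_linear (RL N)"
  using linear_RL linear_conv_bounded_linear by blast

lemma RL_inner: assumes "N \<noteq> 0" shows "RL N x \<bullet> RL N y = x \<bullet> y"
proof -
  have "N \<bullet> N \<noteq> 0" using assms by simp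
  then show ?thesis unfolding RL_def
    by (simp add: inner_diff_left inner_diff_right inner_commute field_simps power2_eq_square)
qed

lemma cross_ident: "(a \<bullet> N) *\<^sub>R cross3 N b + (b \<bullet> N) *\<^sub>R cross3 a N + (cross3 a b \<bullet> N) *\<^sub>R N = (N \<bullet> N) *\<^sub>R cross3 a b"
  by (simp add: cross3_simps forall_3) 

lemma RL_cross: assumes "N \<noteq> 0" shows "cross3 (RL N a) (RL N b) = - RL N (cross3 a b)"
proof -
  have nz: "N \<bullet> N \<noteq> 0" using assms by simp
  define k where "k = 2 / (N \<bullet> N)"
  have R: "RL N x = x - (k * (x \<bullet> N)) *\<^sub>R N" for x unfolding RL_def k_def by simp
  have "cross3 (RL N a) (RL N b) = cross3 a b - (k * (b \<bullet> N)) *\<^sub>R cross3 a N - (k * (a \<bullet> N)) *\<^sub>R cross3 N b"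
    unfolding R by (simp add: cross3_simps)
  also have "\<dots> = cross3 a b - k *\<^sub>R ((a \<bullet> N) *\<^sub>R cross3 N b + (b \<bullet> N) *\<^sub>R cross3 a N)"
    by (simp add: algebra_simps)
  also have "(a \<bullet> N) *\<^sub>R cross3 N b + (b \<bullet> N) *\<^sub>R cross3 a N = (N \<bullet> N) *\<^sub>R cross3 a b - (cross3 a b \<bullet> N) *\<^sub>R N"
    using cross_ident[of a N b] by (simp add: algebra_simps)
  also have "cross3 a b - k *\<^sub>R ((N \<bullet> N) *\<^sub>R cross3 a b - (cross3 a b \<bullet> N) *\<^sub>R N) = - RL N (cross3 a b)"
    unfolding R using nz by (simp add: k_def algebra_simps vec_eq_iff)
  finally show ?thesis .
qed

lemma RL_fix: "x \<bullet> N = 0 \<Longrightarrow> RL N x = x" unfolding RL_def by simp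


lemma dirder_affine:
  fixes f :: "'a::euclidean_space \<Rightarrow> 'b::real_normed_vector"
  assumes sm: "smooth_on U f" and L: "bounded_linear L" and T: "\<And>x. T x = L x + c0"
  shows "set ds \<subseteq> Basis \<Longrightarrow> \<forall>x\<in>U. dirder ds (T \<circ> f) x = L (dirder ds f x) + (if ds = [] then c0 else 0)"
proof (induction ds)
  case Nil
  then show ?case by (simp add: T)
next
  case (Cons d ds)
  have U: "open U" using sm unfolding smooth_on_def by auto
  have IH: "\<forall>x\<in>U. dirder ds (T \<circ> f) x = L (dirder ds f x) + (if ds = [] then c0 else 0)"
    using Cons.IH Cons.prems by (simp add: o_def)
  show ?case
  proof
    fix x assume x: "x \<in> U"
    have "dirder ds f differentiable (at x)" using sm Cons.prems x unfolding smooth_on_def by auto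
    then have D: "(dirder ds f has_derivative frechet_derivative (dirder ds f) (at x)) (at x)"
      by (simp add: frechet_derivative_works)
    have "((\<lambda>y. L (dirder ds f y) + (if ds = [] then c0 else 0)) has_derivative
           (\<lambda>h. L (frechet_derivative (dirder ds f) (at x) h))) (at x)"
      by (rule has_derivative_add_const) (rule bounded_linear.has_derivative[OF L D])
    then have "(dirder ds (T \<circ> f) has_derivative
           (\<lambda>h. L (frechet_derivative (dirder ds f) (at x) h))) (at x)"
      by (rule has_derivative_transform_within_open[OF _ U x]) (metis IH)
    then have "frechet_derivative (dirder ds (T \<circ> f)) (at x) = (\<lambda>h. L (frechet_derivative (dirder ds f) (at x) h))"
      by (rule frechet_derivative_at[symmetric])
    then show "dirder (d # ds) (T \<circ> f) x = L (dirder (d # ds) f x) + (if d # ds = [] then c0 else 0)"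
      by simp
  qed
qed

lemma smooth_on_affine:
  fixes f :: "'a::euclidean_space \<Rightarrow> 'b::real_normed_vector"
  assumes sm: "smooth_on U f" and L: "bounded_linear L" and T: "\<And>x. T x = L x + c0"
  shows "smooth_on U (T \<circ> f)"
  unfolding smooth_on_def
proof (intro conjI allI impI ballI)
  show U: "open U" using sm unfolding smooth_on_def by auto
  fix ds :: "'a list" assume ds: "set ds \<subseteq> Basis"
  define c where "c = (if ds = [] then c0 else 0)"
  have eq: "\<forall>x\<in>U. dirder ds (T \<circ> f) x = L (dirder ds f x) + c"
    using dirder_affine[OF sm L T ds] by (simp add: c_def)
  have d: "\<forall>x\<in>U. dirder ds f differentiable (at x)" and ct: "continuous_on U (dirder ds f)"
    using sm ds unfolding smooth_on_def by auto
  {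
    fix x assume x: "x \<in> U"
    have "(dirder ds f has_derivative frechet_derivative (dirder ds f) (at x)) (at x)"
      using d x by (simp add: frechet_derivative_works)
    then have "((\<lambda>y. L (dirder ds f y) + c) has_derivative (\<lambda>h. L (frechet_derivative (dirder ds f) (at x) h))) (at x)"
      by (intro has_derivative_add_const bounded_linear.has_derivative[OF L])
    then obtain D where "((\<lambda>y. L (dirder ds f y) + c) has_derivative D) (at x)" by blast
    then have "(dirder ds (T \<circ> f) has_derivative D) (at x)"
      by (rule has_derivative_transform_within_open[OF _ U x]) (metis eq)
    then show "dirder ds (T \<circ> f) differentiable (at x)" unfolding differentiable_def by blast
  }
  have "continuous_on U (\<lambda>y. L (dirder ds f y) + c)"
    by (intro continuous_intros continuous_on_compose2[OF linear_continuous_on[OF L] ct]) auto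
  then show "continuous_on U (dirder ds (T \<circ> f))"
    using continuous_on_cong[of U U "dirder ds (T \<circ> f)" "\<lambda>y. L (dirder ds f y) + c"] eq by metis
qed


lemma vd_local:
  assumes "open S" "u \<in> S" "\<And>x. x \<in> S \<Longrightarrow> f x = g x"
  shows "vector_derivative f (at u) = vector_derivative g (at u)"
proof -
  have "(f has_vector_derivative v) (at u) \<longleftrightarrow> (g has_vector_derivative v) (at u)" for v
    using has_vector_derivative_transform_within_open[OF _ assms(1,2), of f v g]
      has_vector_derivative_transform_within_open[OF _ assms(1,2), of g v f] assms(3) by metis
  then show ?thesis unfolding vector_derivative_def by simp
qed

lemma deriv_perp:
  fixes h :: "real \<Rightarrow> real^3"
  assumes d: "(h has_vector_derivative h') (at u)" and S: "open S" "u \<in> S" and c: "\<And>x. x \<in> S \<Longrightarrow> h x \<bullet> w = k"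
  shows "h' \<bullet> w = 0"
proof -
  have 1: "((\<lambda>x. h x \<bullet> w) has_vector_derivative (h u \<bullet> 0 + h' \<bullet> w)) (at u)"
    by (rule bounded_bilinear.has_vector_derivative[OF bounded_bilinear_inner d has_vector_derivative_const])
  have "((\<lambda>x. k) has_vector_derivative 0) (at u)" by simp
  then have 2: "((\<lambda>x. h x \<bullet> w) has_vector_derivative 0) (at u)"
    by (rule has_vector_derivative_transform_within_open[OF _ S]) (use c in auto)
  from vector_derivative_unique_at[OF 1 2] show ?thesis by simp
qed

lemma deriv_unit:
  fixes h :: "real \<Rightarrow> real^3"
  assumes d: "(h has_vector_derivative h') (at u)" and S: "open S" "u \<in> S" and c: "\<And>x. x \<in> S \<Longrightarrow> h x \<bullet> h x = 1"
  shows "h' \<bullet> h u = 0"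
proof -
  have 1: "((\<lambda>x. h x \<bullet> h x) has_vector_derivative (h u \<bullet> h' + h' \<bullet> h u)) (at u)"
    by (rule bounded_bilinear.has_vector_derivative[OF bounded_bilinear_inner d d])
  have "((\<lambda>x. 1) has_vector_derivative 0) (at u)" by simp
  then have 2: "((\<lambda>x. h x \<bullet> h x) has_vector_derivative 0) (at u)"
    by (rule has_vector_derivative_transform_within_open[OF _ S]) (use c in auto)
  from vector_derivative_unique_at[OF 1 2] show ?thesis by (simp add: inner_commute)
qed

lemma partial_u:
  fixes f :: "real \<times> real \<Rightarrow> real^3"
  assumes "f differentiable (at (a, b))"
  shows "((\<lambda>x. f (x, b)) has_vector_derivative frechet_derivative f (at (a, b)) (1, 0)) (at a)"
proof -
  let ?D = "frechet_derivative f (at (a, b))"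
  have D: "(f has_derivative ?D) (at (a, b))" using assms frechet_derivative_works by blast
  have P: "((\<lambda>x::real. (x, b)) has_derivative (\<lambda>h. (h, 0))) (at a)"
    by (auto intro!: derivative_eq_intros)
  have "((\<lambda>x. f (x, b)) has_derivative (\<lambda>h. ?D (h, 0))) (at a)"
    using diff_chain_at[OF P D] by (simp add: o_def)
  moreover have "(\<lambda>h. ?D (h, 0)) = (\<lambda>h. h *\<^sub>R ?D (1, 0))"
  proof -
    have lin: "linear ?D" using D has_derivative_linear by blast
    show ?thesis
    proof
      fix h :: real
      have "?D (h, 0) = ?D (h *\<^sub>R (1, 0))" by simp
      also have "\<dots> = h *\<^sub>R ?D (1, 0)" by (rule linear_scale[OF lin])
      finally show "?D (h, 0) = h *\<^sub>R ?D (1, 0)" .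
    qed
  qed
  ultimately show ?thesis unfolding has_vector_derivative_def by (simp only:)
qed

lemma partial_v:
  fixes f :: "real \<times> real \<Rightarrow> real^3"
  assumes "f differentiable (at (a, b))"
  shows "((\<lambda>y. f (a, y)) has_vector_derivative frechet_derivative f (at (a, b)) (0, 1)) (at b)"
proof -
  let ?D = "frechet_derivative f (at (a, b))"
  have D: "(f has_derivative ?D) (at (a, b))" using assms frechet_derivative_works by blast
  have P: "((\<lambda>y::real. (a, y)) has_derivative (\<lambda>h. (0, h))) (at b)"
    by (auto intro!: derivative_eq_intros)
  have "((\<lambda>y. f (a, y)) has_derivative (\<lambda>h. ?D (0, h))) (at b)"
    using diff_chain_at[OF P D] by (simp add: o_def)
  moreover have "(\<lambda>h. ?D (0, h)) = (\<lambda>h. h *\<^sub>R ?D (0, 1))"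
  proof -
    have lin: "linear ?D" using D has_derivative_linear by blast
    show ?thesis
    proof
      fix h :: real
      have "?D (0, h) = ?D (h *\<^sub>R (0, 1))" by simp
      also have "\<dots> = h *\<^sub>R ?D (0, 1)" by (rule linear_scale[OF lin])
      finally show "?D (0, h) = h *\<^sub>R ?D (0, 1)" .
    qed
  qed
  ultimately show ?thesis unfolding has_vector_derivative_def by (simp only:)
qed

lemma hvd_linear:
  assumes "bounded_linear L" "(h has_vector_derivative v) (at x)"
  shows "((\<lambda>y. L (h y)) has_vector_derivative L v) (at x)"
  using bounded_linear.has_derivative[OF assms(1) assms(2)[unfolded has_vector_derivative_def]]
  unfolding has_vector_derivative_def by (simp add: linear_scale bounded_linear.linear[OF assms(1)])

lemma basis10: "((1::real), (0::real)) \<in> Basis" and basis01: "((0::real), (1::real)) \<in> Basis"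
  by (auto simp: Basis_prod_def)


lemma frame:
  fixes f :: "real \<times> real \<Rightarrow> real^3"
  assumes sm: "smooth_on U f" and J: "open J" "J \<times> {0} \<subseteq> U"
    and nz: "\<forall>p\<in>U. cross3 (pu f p) (pv f p) \<noteq> 0"
    and pl: "\<forall>u\<in>J. f (u, 0) \<bullet> N = k" and u: "u \<in> J"
  shows "unit_tangent (base_curve f) u \<bullet> unit_tangent (base_curve f) u = 1"
    "unit_tangent (base_curve f) u \<bullet> N = 0"
    "vector_derivative (unit_tangent (base_curve f)) (at u) \<bullet> N = 0"
    "vector_derivative (unit_tangent (base_curve f)) (at u) \<bullet> unit_tangent (base_curve f) u = 0"
proof -
  have U: "open U" using sm unfolding smooth_on_def by auto
  define S0 where "S0 = (\<lambda>x::real. (x, 0::real)) -` U"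
  have S0: "open S0" unfolding S0_def
    by (rule continuous_open_vimage[OF U]) (auto intro: continuous_intros)
  have JS: "J \<subseteq> S0" using J unfolding S0_def by auto
  have fd: "f differentiable (at (x, 0))" if "x \<in> S0" for x
    using sm that unfolding smooth_on_def S0_def by (metis dirder.simps(1) empty_set empty_subsetI vimageE)
  have bc: "base_curve f = (\<lambda>x. f (x, 0))" by (rule ext) (simp add: base_curve_def)
  have tv: "(base_curve f has_vector_derivative pu f (x, 0)) (at x)" if "x \<in> S0" for x
    unfolding bc pu_def using partial_u[OF fd[OF that]] .
  have teq: "tangent (base_curve f) x = pu f (x, 0)" if "x \<in> S0" for x
    unfolding tangent_def using vector_derivative_at[OF tv[OF that]] .
  have tnz: "pu f (x, 0) \<noteq> 0" if "x \<in> S0" for x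
    using nz that unfolding S0_def by (metis cross_zero_left vimageE)
  have uS: "u \<in> S0" using u JS by auto
  have "dirder [(1, 0)] f differentiable (at (u, 0))"
  proof -
    have "set [((1::real), (0::real))] \<subseteq> Basis" using basis10 by simp
    then show ?thesis using sm uS unfolding smooth_on_def S0_def by blast
  qed
  moreover have "dirder [(1, 0)] f = pu f" by (rule ext) (simp add: pu_def)
  ultimately have pud: "pu f differentiable (at (u, 0))" by simp
  have "(\<lambda>x. pu f (x, 0)) differentiable (at u)"
    by (rule differentiable_compose[of "pu f" "\<lambda>x. (x, 0)" u, simplified, OF pud])
  then obtain D where "((\<lambda>x. pu f (x, 0)) has_derivative D) (at u)" unfolding differentiable_def by blast
  then have "(tangent (base_curve f) has_derivative D) (at u)"
    by (rule has_derivative_transform_within_open[OF _ S0 uS]) (use teq in auto)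
  then have td: "tangent (base_curve f) differentiable (at u)" unfolding differentiable_def by blast
  have ut: "unit_tangent (base_curve f) = (\<lambda>x. (1 / norm (tangent (base_curve f) x)) *\<^sub>R tangent (base_curve f) x)"
    by (rule ext) (simp add: unit_tangent_def)
  have tunz: "tangent (base_curve f) u \<noteq> 0" using teq[OF uS] tnz[OF uS] by simp
  have "(\<lambda>x. norm (tangent (base_curve f) x)) differentiable (at u)"
    by (rule differentiable_compose[of norm, OF differentiable_norm_at[OF tunz] td])
  then have ed: "unit_tangent (base_curve f) differentiable (at u)"
    unfolding ut using td tunz by (intro differentiable_scaleR differentiable_divide) auto
  let ?e = "unit_tangent (base_curve f)"
  let ?e' = "vector_derivative (unit_tangent (base_curve f)) (at u)"
  have ev: "(?e has_vector_derivative ?e') (at u)" using ed vector_derivative_works by blast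
  have unit: "?e x \<bullet> ?e x = 1" if "x \<in> S0" for x
  proof -
    have "tangent (base_curve f) x \<noteq> 0" using teq[OF that] tnz[OF that] by simp
    then show ?thesis unfolding unit_tangent_def
      by (simp add: power2_norm_eq_inner[symmetric] power2_eq_square field_simps)
  qed
  have tperp: "tangent (base_curve f) x \<bullet> N = 0" if "x \<in> J" for x
  proof -
    have xS: "x \<in> S0" using that JS by auto
    have "(base_curve f has_vector_derivative tangent (base_curve f) x) (at x)"
      using tv[OF xS] teq[OF xS] by simp
    then show ?thesis by (rule deriv_perp[OF _ J(1) that]) (use pl in \<open>auto simp: base_curve_def\<close>)
  qed
  have eperp: "?e x \<bullet> N = 0" if "x \<in> J" for x
    using tperp[OF that] by (simp add: unit_tangent_def)
  show "?e u \<bullet> ?e u = 1" using unit uS by blast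
  show "?e u \<bullet> N = 0" using eperp u by blast
  show "?e' \<bullet> N = 0" by (rule deriv_perp[OF ev J(1) u eperp])
  show "?e' \<bullet> ?e u = 0" by (rule deriv_unit[OF ev S0 uS unit])
qed


lemma rep_unique:
  fixes e n r :: "real^3"
  assumes ee: "e \<bullet> e = 1" and nn: "n \<bullet> n = 1" and en: "e \<bullet> n = 0"
   and r1: "r = cos \<beta> *\<^sub>R e + sin \<beta> *\<^sub>R (cos \<alpha> *\<^sub>R n + sin \<alpha> *\<^sub>R cross3 e n)"
   and r2: "r = cos \<beta>' *\<^sub>R e + sin \<beta>' *\<^sub>R (cos \<alpha>' *\<^sub>R n + sin \<alpha>' *\<^sub>R cross3 e n)"
   and a1: "\<bar>\<alpha>\<bar> < pi/2" and a2: "\<bar>\<alpha>'\<bar> < pi/2"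
   and b1: "0 < \<beta>" "\<beta> < pi" and b2: "0 < \<beta>'" "\<beta>' < pi"
  shows "\<alpha> = \<alpha>'"
proof -
  let ?b = "cross3 e n"
  have eb: "e \<bullet> ?b = 0" and nb: "n \<bullet> ?b = 0" by (simp_all add: dot_cross_self)
  have "(norm ?b)\<^sup>2 + (e \<bullet> n)\<^sup>2 = (norm e * norm n)\<^sup>2" by (rule norm_cross_dot)
  then have bb: "?b \<bullet> ?b = 1" using ee nn en
    by (simp add: power2_norm_eq_inner[symmetric] power_mult_distrib)
  have ne: "n \<bullet> e = 0" "?b \<bullet> e = 0" "?b \<bullet> n = 0" using en eb nb by (simp_all add: inner_commute)
  have "r \<bullet> e = cos \<beta>" using r1 ee ne by (simp add: inner_add_left)
  moreover have "r \<bullet> e = cos \<beta>'" using r2 ee ne by (simp add: inner_add_left)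
  ultimately have "cos \<beta> = cos \<beta>'" by simp
  then have "arccos (cos \<beta>) = arccos (cos \<beta>')" by simp
  then have bq: "\<beta> = \<beta>'" using b1 b2 by (simp add: arccos_cos)
  have "r \<bullet> ?b = sin \<beta> * sin \<alpha>" using r1 bb eb nb by (simp add: inner_add_left)
  moreover have "r \<bullet> ?b = sin \<beta> * sin \<alpha>'" using r2 bb eb nb bq by (simp add: inner_add_left)
  moreover have "sin \<beta> > 0" using b1 by (simp add: sin_gt_zero)
  ultimately have "sin \<alpha> = sin \<alpha>'" by simp
  then have "arcsin (sin \<alpha>) = arcsin (sin \<alpha>')" by simp
  then show ?thesis using a1 a2 by (simp add: arcsin_sin)
qed


lemma smooth_on_mono: "smooth_on U h \<Longrightarrow> open V \<Longrightarrow> V \<subseteq> U \<Longrightarrow> smooth_on V h"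
  unfolding smooth_on_def by (meson continuous_on_subset subsetD)

lemma RL_norm: "N \<noteq> 0 \<Longrightarrow> norm (RL N x) = norm x"
  by (simp add: norm_eq_sqrt_inner RL_inner)

lemma RL_eq0: "N \<noteq> 0 \<Longrightarrow> RL N x = 0 \<Longrightarrow> x = 0"
  using RL_norm by (metis norm_eq_zero)

lemma refl_invol: "N \<noteq> 0 \<Longrightarrow> reflection p0 N (reflection p0 N x) = x"
proof -
  assume "N \<noteq> 0"
  then have nz: "N \<bullet> N \<noteq> 0" by simp
  define a where "a = 2 * ((x - p0) \<bullet> N) / (N \<bullet> N)"
  have r: "reflection p0 N x = x - a *\<^sub>R N" unfolding reflection_def a_def by simp
  have e1: "(x - a *\<^sub>R N - p0) \<bullet> N = (x - p0) \<bullet> N - a * (N \<bullet> N)"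
    by (simp add: inner_diff_left algebra_simps)
  have e2: "a * (N \<bullet> N) = 2 * ((x - p0) \<bullet> N)" using nz unfolding a_def by simp
  have "(x - a *\<^sub>R N - p0) \<bullet> N = - ((x - p0) \<bullet> N)" using e1 e2 by simp
  then have "reflection p0 N (x - a *\<^sub>R N) = x - a *\<^sub>R N - (2 * (- ((x - p0) \<bullet> N)) / (N \<bullet> N)) *\<^sub>R N"
    unfolding reflection_def by simp
  also have "(2 * (- ((x - p0) \<bullet> N)) / (N \<bullet> N)) = - a" unfolding a_def by simp
  also have "x - a *\<^sub>R N - (- a) *\<^sub>R N = x" by simp
  finally show ?thesis unfolding r .
qed

lemma refl_fix: "x \<in> plane p0 N \<Longrightarrow> reflection p0 N x = x"
  unfolding plane_def reflection_def by simp

lemma dd_pu: "pu h = dirder [(1, 0)] h" and dd_pv: "pv h = dirder [(0, 1)] h"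
  and dd_puu: "pu (pu h) = dirder [(1, 0), (1, 0)] h"
  and dd_pvu: "pv (pu h) = dirder [(0, 1), (1, 0)] h"
  and dd_pvv: "pv (pv h) = dirder [(0, 1), (0, 1)] h"
  by (simp_all add: pu_def[abs_def] pv_def[abs_def])

lemma gauss_eq:
  assumes N: "N \<noteq> 0" and "pu g p = RL N (pu f p)" "pv g p = RL N (pv f p)"
    "pu (pu g) p = RL N (pu (pu f) p)" "pv (pu g) p = RL N (pv (pu f) p)" "pv (pv g) p = RL N (pv (pv f) p)"
  shows "gauss_curvature g p = gauss_curvature f p"
  unfolding gauss_curvature_def Let_def assms(2-) RL_cross[OF N]
  by (simp add: RL_inner[OF N] inner_minus_right)


theorem lemma4p1:
  fixes gam :: "real \<Rightarrow> real^3" and I J :: "real set"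
    and p0 N :: "real^3" and f :: "real \<times> real \<Rightarrow> real^3"
  assumes "embedded_regular_curve I gam"
    and "\<forall>u\<in>I. curvature gam u \<noteq> 0"
    and "N \<noteq> 0"
    and "gam ` I \<subseteq> plane p0 N"
    and "in_D I gam J f"
  shows "is_dual I gam J f (reflection p0 N \<circ> f)"
proof -
  have N: "N \<noteq> 0" by fact
  define T where "T = reflection p0 N"
  define g where "g = T \<circ> f"
  define L where "L = RL N"
  define c0 where "c0 = (2 * (p0 \<bullet> N) / (N \<bullet> N)) *\<^sub>R N"
  have TL: "T x = L x + c0" for x unfolding T_def L_def c0_def by (rule reflection_RL)
  have bL: "bounded_linear L" unfolding L_def by (rule bl_RL)
  have lL: "linear L" unfolding L_def by (rule linear_RL)
  have ds: "developable_strip J f" and phi: "\<exists>\<phi>. strict_mono_on J \<phi> \<and> \<phi> ` J = I \<and> (\<forall>u\<in>J. base_curve f u = gam (\<phi> u))"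
    and reps: "\<forall>u\<in>J. \<exists>\<alpha> \<beta>. angular_rep f u \<alpha> \<beta>"
    using assms(5) unfolding in_D_def by auto
  obtain \<phi> where phi1: "strict_mono_on J \<phi>" "\<phi> ` J = I" and phi2: "\<forall>u\<in>J. base_curve f u = gam (\<phi> u)"
    using phi by blast
  have J: "open J" "is_interval J" "J \<noteq> {}" using ds unfolding developable_strip_def by auto
  obtain U where U: "open U" "J \<times> {0} \<subseteq> U" and sm: "smooth_on U f" and inj: "inj_on f U"
    and ci: "continuous_on (f ` U) (inv_into U f)"
    and nz: "\<forall>p\<in>U. cross3 (pu f p) (pv f p) \<noteq> 0"
    and ruled: "\<forall>u v. (u, v) \<in> U \<longrightarrow> f (u, v) = f (u, 0) + v *\<^sub>R ruling f u"
    and rn: "\<forall>u\<in>J. norm (ruling f u) = 1"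
    and gc: "\<forall>p\<in>U. gauss_curvature f p = 0"
    using ds unfolding developable_strip_def by blast
  have inpl: "f (u, 0) \<in> plane p0 N" if "u \<in> J" for u
    using phi2 phi1(2) assms(4) that unfolding base_curve_def by blast
  have gfix: "g (u, 0) = f (u, 0)" if "u \<in> J" for u
    unfolding g_def T_def using refl_fix[OF inpl[OF that]] by simp
  have pl: "\<forall>u\<in>J. f (u, 0) \<bullet> N = p0 \<bullet> N"
    using inpl unfolding plane_def by (simp add: inner_diff_left)
  have DA: "dirder ds g x = L (dirder ds f x)" if "set ds \<subseteq> Basis" "ds \<noteq> []" "x \<in> U" for ds x
    using dirder_affine[OF sm bL TL that(1)] that unfolding g_def by auto
  have b11: "set [((1::real), (0::real))] \<subseteq> Basis" "set [((0::real), (1::real))] \<subseteq> Basis"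
    "set [((1::real), (0::real)), (1, 0)] \<subseteq> Basis" "set [((0::real), (1::real)), (1, 0)] \<subseteq> Basis"
    "set [((0::real), (1::real)), (0, 1)] \<subseteq> Basis"
    using basis10 basis01 by auto
  have pug: "pu g p = L (pu f p)" "pv g p = L (pv f p)" "pu (pu g) p = L (pu (pu f) p)"
    "pv (pu g) p = L (pv (pu f) p)" "pv (pv g) p = L (pv (pv f) p)" if "p \<in> U" for p
  proof -
    show "pu g p = L (pu f p)" unfolding dd_pu by (rule DA[OF b11(1) _ that]) simp
    show "pv g p = L (pv f p)" unfolding dd_pv by (rule DA[OF b11(2) _ that]) simp
    show "pu (pu g) p = L (pu (pu f) p)" unfolding dd_puu by (rule DA[OF b11(3) _ that]) simp
    show "pv (pu g) p = L (pv (pu f) p)" unfolding dd_pvu by (rule DA[OF b11(4) _ that]) simp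
    show "pv (pv g) p = L (pv (pv f) p)" unfolding dd_pvv by (rule DA[OF b11(5) _ that]) simp
  qed
  have fdiff: "f differentiable (at x)" if "x \<in> U" for x
    using sm that unfolding smooth_on_def by (metis dirder.simps(1) empty_set empty_subsetI)
  have rf: "ruling f u = pv f (u, 0)" if "(u, 0) \<in> U" for u
    unfolding ruling_def pv_def using vector_derivative_at[OF partial_v[OF fdiff[OF that]]] .
  have rg: "ruling g u = L (ruling f u)" if "(u, 0) \<in> U" for u
  proof -
    have "((\<lambda>v. L (f (u, v))) has_vector_derivative L (pv f (u, 0))) (at 0)"
      using hvd_linear[OF bL partial_v[OF fdiff[OF that]]] unfolding pv_def .
    then have "((\<lambda>v. L (f (u, v)) + c0) has_vector_derivative L (pv f (u, 0))) (at 0)"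
      by (simp add: has_vector_derivative_add_const)
    then have "((\<lambda>v. g (u, v)) has_vector_derivative L (pv f (u, 0))) (at 0)"
      unfolding g_def by (simp add: TL)
    then have "vector_derivative (\<lambda>v. g (u, v)) (at 0) = L (pv f (u, 0))" by (rule vector_derivative_at)
    then show ?thesis unfolding ruling_def using rf[OF that] unfolding ruling_def by simp
  qed
  define U' where "U' = U \<inter> (\<lambda>p. (fst p, 0::real)) -` U"
  have U'o: "open U'" unfolding U'_def
    by (intro open_Int U continuous_open_vimage) (auto intro: continuous_intros)
  have U'J: "J \<times> {0} \<subseteq> U'" using U unfolding U'_def by auto
  have U'U: "U' \<subseteq> U" unfolding U'_def by auto
  have U'0: "(u, 0) \<in> U" if "(u, v) \<in> U'" for u v using that unfolding U'_def by auto
  have smg: "smooth_on U' g"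
    unfolding g_def by (rule smooth_on_mono[OF smooth_on_affine[OF sm bL TL] U'o U'U])
  have Tinv: "T (T x) = x" for x unfolding T_def using refl_invol[OF N] .
  have injT: "inj T" by (metis Tinv injI)
  have injg: "inj_on g U'" unfolding g_def
    by (rule comp_inj_on[OF inj_on_subset[OF inj U'U]]) (use injT inj_on_subset in blast)
  have cT: "continuous_on A T" for A unfolding TL
    by (intro continuous_intros linear_continuous_on[OF bL])
  have cig: "continuous_on (g ` U') (inv_into U' g)"
  proof -
    have eq: "inv_into U' g y = inv_into U f (T y)" if yU: "y \<in> g ` U'" for y
    proof -
      obtain x where x: "x \<in> U'" "y = g x" using yU by blast
      have "inv_into U' g y = x" using x injg by (simp add: inv_into_f_f)
      moreover have "T y = f x" using x Tinv unfolding g_def by simp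
      moreover have "inv_into U f (f x) = x" using x U'U inj by (simp add: inv_into_f_f subsetD)
      ultimately show ?thesis by simp
    qed
    have "T ` (g ` U') \<subseteq> f ` U" using U'U Tinv unfolding g_def by auto
    then have "continuous_on (g ` U') (\<lambda>y. inv_into U f (T y))"
      by (intro continuous_on_compose2[OF ci cT]) 
    then show ?thesis using continuous_on_cong eq by (metis (no_types, lifting))
  qed
  have nzg: "\<forall>p\<in>U'. cross3 (pu g p) (pv g p) \<noteq> 0"
  proof
    fix p assume p: "p \<in> U'"
    then have pU: "p \<in> U" using U'U by auto
    have "cross3 (pu g p) (pv g p) = - L (cross3 (pu f p) (pv f p))"
      unfolding pug[OF pU] L_def by (rule RL_cross[OF N])
    then show "cross3 (pu g p) (pv g p) \<noteq> 0" using nz pU RL_eq0[OF N] unfolding L_def by auto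
  qed
  have ruledg: "\<forall>u v. (u, v) \<in> U' \<longrightarrow> g (u, v) = g (u, 0) + v *\<^sub>R ruling g u"
  proof (intro allI impI)
    fix u v assume uv: "(u, v) \<in> U'"
    have "g (u, v) = T (f (u, 0) + v *\<^sub>R ruling f u)" using ruled uv U'U unfolding g_def by auto
    also have "\<dots> = L (f (u, 0)) + c0 + v *\<^sub>R L (ruling f u)"
      unfolding TL by (simp add: linear_add[OF lL] linear_scale[OF lL])
    also have "\<dots> = g (u, 0) + v *\<^sub>R ruling g u" using rg[OF U'0[OF uv]] unfolding g_def by (simp add: TL)
    finally show "g (u, v) = g (u, 0) + v *\<^sub>R ruling g u" .
  qed
  have rng: "\<forall>u\<in>J. norm (ruling g u) = 1"
    using rn U rg RL_norm[OF N] unfolding L_def by auto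
  have gcg: "\<forall>p\<in>U'. gauss_curvature g p = 0"
  proof
    fix p assume p: "p \<in> U'"
    then have pU: "p \<in> U" using U'U by auto
    have "gauss_curvature g p = gauss_curvature f p"
      by (rule gauss_eq[OF N]) (use pug[OF pU] in \<open>simp_all add: L_def\<close>)
    then show "gauss_curvature g p = 0" using gc pU by simp
  qed
  have dsg: "developable_strip J g"
    unfolding developable_strip_def using J U'o U'J smg injg cig nzg ruledg rng gcg by blast
  have bceq: "base_curve g x = base_curve f x" if "x \<in> J" for x
    using gfix[OF that] by (simp add: base_curve_def)
  have teq: "tangent (base_curve g) x = tangent (base_curve f) x" if "x \<in> J" for x
    unfolding tangent_def by (rule vd_local[OF J(1) that bceq])
  have uteq: "unit_tangent (base_curve g) x = unit_tangent (base_curve f) x" if "x \<in> J" for x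
    unfolding unit_tangent_def using teq[OF that] by simp
  have vdeq: "vector_derivative (unit_tangent (base_curve g)) (at x) = vector_derivative (unit_tangent (base_curve f)) (at x)"
    if "x \<in> J" for x by (rule vd_local[OF J(1) that uteq])
  have pneq: "principal_normal (base_curve g) x = principal_normal (base_curve f) x" if "x \<in> J" for x
    unfolding principal_normal_def using vdeq[OF that] by simp
  have bneq: "binormal (base_curve g) x = binormal (base_curve f) x" if "x \<in> J" for x
    unfolding binormal_def using uteq[OF that] pneq[OF that] by simp
  have key: "(\<exists>\<alpha> \<beta>. angular_rep g u \<alpha> \<beta>)
     \<and> first_angular_function g u = - first_angular_function f u" if u: "u \<in> J" for u
  proof -
    obtain \<alpha> \<beta> where ar: "angular_rep f u \<alpha> \<beta>" using reps u by blast
    let ?e = "unit_tangent (base_curve f) u"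
    let ?e' = "vector_derivative (unit_tangent (base_curve f)) (at u)"
    let ?n = "principal_normal (base_curve f) u"
    let ?b = "binormal (base_curve f) u"
    have fr: "?e \<bullet> ?e = 1" "?e \<bullet> N = 0" "?e' \<bullet> N = 0" "?e' \<bullet> ?e = 0"
      using frame[OF sm J(1) U(2) nz pl u] by auto
    have ab: "0 < \<bar>\<alpha>\<bar>" "\<bar>\<alpha>\<bar> < pi / 2" "0 < \<beta>" "\<beta> < pi"
      and rr: "ruling f u = cos \<beta> *\<^sub>R ?e + sin \<beta> *\<^sub>R (cos \<alpha> *\<^sub>R ?n + sin \<alpha> *\<^sub>R ?b)"
      using ar unfolding angular_rep_def by auto
    have sb: "sin \<beta> > 0" using ab by (simp add: sin_gt_zero)
    have ne: "norm ?e = 1" using fr(1) by (simp add: norm_eq_sqrt_inner)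
    have e'nz: "?e' \<noteq> 0"
    proof
      assume "?e' = 0"
      then have "?n = 0" "?b = 0" unfolding principal_normal_def binormal_def by auto
      then have "ruling f u = cos \<beta> *\<^sub>R ?e" using rr by simp
      then have "norm (ruling f u) = \<bar>cos \<beta>\<bar> * norm ?e" by simp
      then have "\<bar>cos \<beta>\<bar> = 1" using rn u ne by simp
      then have "(cos \<beta>)\<^sup>2 = 1" using power2_abs[of "cos \<beta>"] by simp
      then have "(sin \<beta>)\<^sup>2 = 0" using sin_cos_squared_add[of \<beta>] by simp
      then show False using sb by simp
    qed
    have nn: "?n \<bullet> ?n = 1" unfolding principal_normal_def using e'nz
      by (simp add: power2_norm_eq_inner[symmetric] power2_eq_square field_simps)
    have en: "?e \<bullet> ?n = 0" unfolding principal_normal_def using fr(4) by (simp add: inner_commute)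
    have nN: "?n \<bullet> N = 0" unfolding principal_normal_def using fr(3) by simp
    have bdef: "?b = cross3 ?e ?n" unfolding binormal_def ..
    have Le: "L ?e = ?e" unfolding L_def using fr(2) by (rule RL_fix)
    have Ln: "L ?n = ?n" unfolding L_def using nN by (rule RL_fix)
    have Lb: "L ?b = - ?b"
    proof -
      have "cross3 (L ?e) (L ?n) = - L (cross3 ?e ?n)" unfolding L_def by (rule RL_cross[OF N])
      then show ?thesis unfolding bdef Le Ln by (metis minus_minus)
    qed
    have u0: "(u, 0) \<in> U" using U(2) u by auto
    have rgu: "ruling g u = cos \<beta> *\<^sub>R ?e + sin \<beta> *\<^sub>R (cos (-\<alpha>) *\<^sub>R ?n + sin (-\<alpha>) *\<^sub>R ?b)"
      using rg[OF u0] unfolding rr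
      by (simp add: linear_add[OF lL] linear_scale[OF lL] Le Ln Lb linear_neg[OF lL])
    have arg: "angular_rep g u (-\<alpha>) \<beta>"
      unfolding angular_rep_def using ab rgu uteq[OF u] pneq[OF u] bneq[OF u] by simp
    have uqf: "\<alpha>' = \<alpha>" if "angular_rep f u \<alpha>' \<beta>'" for \<alpha>' \<beta>'
      using that ab rr unfolding angular_rep_def bdef
      by (intro rep_unique[OF fr(1) nn en, of "ruling f u" \<beta>' \<alpha>' \<beta> \<alpha>]) auto
    have uqg: "\<alpha>' = -\<alpha>" if "angular_rep g u \<alpha>' \<beta>'" for \<alpha>' \<beta>'
      using that ab rgu unfolding angular_rep_def uteq[OF u] pneq[OF u] bneq[OF u] bdef
      by (intro rep_unique[OF fr(1) nn en, of "ruling g u" \<beta>' \<alpha>' \<beta> "-\<alpha>"]) auto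
    have faf: "first_angular_function f u = \<alpha>"
      unfolding first_angular_function_def
      by (rule the_equality) (use ar in blast, use uqf in blast)
    have fag: "first_angular_function g u = - \<alpha>"
      unfolding first_angular_function_def
      by (rule the_equality) (use arg in blast, use uqg in blast)
    show ?thesis using faf fag arg by auto
  qed
  have inDg: "in_D I gam J g"
    unfolding in_D_def
  proof (intro conjI)
    show "developable_strip J g" by (rule dsg)
    show "\<exists>\<phi>. strict_mono_on J \<phi> \<and> \<phi> ` J = I \<and> (\<forall>u\<in>J. base_curve g u = gam (\<phi> u))"
      using phi1 phi2 bceq by auto
    show "\<forall>u\<in>J. \<exists>\<alpha> \<beta>. angular_rep g u \<alpha> \<beta>" using key by blast
  qed
  show ?thesis
    unfolding is_dual_def g_def[symmetric] T_def[symmetric]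
    using inDg gfix key by auto
qed

end
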